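(* For every integer $g\ge1$, $$\sum_{\mathbf d\in\mathbb N^\infty,\ |\mathbf d|=g}\Gamma(\|\mathbf d\|+2g-1)\,\frac{(-1)^{\|\mathbf d\|}}{\mathbf d!\,\prod_{i\ge1}\big((2i+1)4^i\big)^{d_i}}=-\frac{B_{2g}}{2g}.$$
   Context: $\mathbb N^\infty$ is the set of sequences $\mathbf d=(d_1,d_2,\dots)$ of nonnegative integers, almost all zero; $|\mathbf d|=\sum_i id_i$, $\|\mathbf d\|=\sum_id_i$, $\mathbf d!=\prod_id_i!$. $B_n$ are the Bernoulli numbers, $\frac{t}{e^t-1}=\sum_nB_n\frac{t^n}{n!}$. *)

theory Defs
  imports "HOL-Analysis.Analysis" "HOL-Computational_Algebra.Formal_Power_Series"
begin

definition bernoulli_gf :: "real fps" where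
  "bernoulli_gf = fps_X / (fps_exp 1 - 1)"

definition bernoulli :: "nat \<Rightarrow> real" where
  "bernoulli n = fact n * fps_nth bernoulli_gf n"

text \<open>Elements d of N^infinity, d = (d_1, d_2, ...), represented as functions nat => nat
  with d 0 = 0 (index 0 unused) and finite support.\<close>
definition Ninf :: "(nat \<Rightarrow> nat) set" where
  "Ninf = {d. d 0 = 0 \<and> finite {i. d i \<noteq> 0}}"

definition wt :: "(nat \<Rightarrow> nat) \<Rightarrow> nat" where
  "wt d = (\<Sum>i\<in>{i. d i \<noteq> 0}. i * d i)"

definition len :: "(nat \<Rightarrow> nat) \<Rightarrow> nat" where
  "len d = (\<Sum>i\<in>{i. d i \<noteq> 0}. d i)"

definition dfact :: "(nat \<Rightarrow> nat) \<Rightarrow> nat" where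
  "dfact d = (\<Prod>i\<in>{i. d i \<noteq> 0}. fact (d i))"

end

theory Submission
  imports Defs
begin

no_notation vec_nth (infixl "$" 90)
notation fps_nth (infixl "$" 75)

lemma xderiv_nth: "(fps_X * fps_deriv (f::real fps)) $ n = of_nat n * f $ n"
  by (cases n) (simp_all add: fps_X_mult_nth)

lemma lag_aux:
  fixes r :: "real fps"
  assumes r0: "r $ 0 \<noteq> 0"
  shows "(inverse r ^ Suc m * (r + fps_X * fps_deriv r)) $ m = (if m = 0 then 1 else 0)"
proof (cases m)
  case 0
  then show ?thesis using r0 by simp
next
  case (Suc k)
  define V where "V = inverse r"
  have Vr: "V * r = 1" using r0 by (simp add: V_def inverse_mult_eq_1)
  have dV: "fps_deriv V = - fps_deriv r * V^2" using fps_inverse_deriv[OF r0] by (simp add: V_def)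
  have "fps_deriv (V ^ m) = of_nat m * fps_deriv V * V ^ k"
    using fps_deriv_power'[of V m] Suc by simp
  hence dVm: "fps_deriv (V ^ m) = - of_nat m * fps_deriv r * V ^ Suc m"
    using Suc by (simp add: dV power2_eq_square algebra_simps)
  have e1: "V ^ Suc m * (r + fps_X * fps_deriv r) = V ^ m + fps_X * fps_deriv r * V ^ Suc m"
    by (simp add: algebra_simps Vr)
  have h1: "of_nat m * (fps_X * fps_deriv r * V ^ Suc m) = - (fps_X * fps_deriv (V ^ m))"
    by (simp only: dVm) (simp add: algebra_simps)
  have "(of_nat m * (fps_X * fps_deriv r * V ^ Suc m)) $ m = real m * (fps_X * fps_deriv r * V ^ Suc m) $ m"
    by (simp add: fps_of_nat)
  moreover have "(- (fps_X * fps_deriv (V ^ m))) $ m = - (real m * (V ^ m) $ m)"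
    by (simp only: fps_neg_nth xderiv_nth)
  ultimately have "real m * (fps_X * fps_deriv r * V ^ Suc m) $ m = - (real m * (V ^ m) $ m)"
    using h1 by metis
  hence "real m * (fps_X * fps_deriv r * V ^ Suc m) $ m = real m * (- (V ^ m) $ m)" by simp
  moreover have "real m \<noteq> 0" using Suc by simp
  ultimately have "(fps_X * fps_deriv r * V ^ Suc m) $ m = - (V ^ m) $ m" by (metis mult_minus_right mult_left_cancel)
  then show ?thesis using Suc e1 by (simp add: V_def)
qed

lemma mult_nth_cong:
  assumes "\<And>m. m \<le> n \<Longrightarrow> f $ m = g $ m"
  shows "(f * h) $ n = (g * h) $ n"
  using assms by (simp add: fps_mult_nth)

lemma lagrange:
  fixes r S :: "real fps"
  assumes r0: "r $ 0 \<noteq> 0"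
  shows "((S oo (fps_X * r)) * (inverse r ^ Suc n * (r + fps_X * fps_deriv r))) $ n = S $ n"
proof -
  define F where "F = fps_X * r"
  define Q where "Q = inverse r ^ Suc n * (r + fps_X * fps_deriv r)"
  define P where "P = (\<Sum>i=0..n. fps_const (S $ i) * F ^ i)"
  have F0: "F $ 0 = 0" by (simp add: F_def)
  have Fi: "F ^ i = fps_X ^ i * r ^ i" for i by (simp add: F_def power_mult_distrib)
  have Fz: "(F ^ i) $ m = 0" if "m < i" for i m using that by (simp add: Fi fps_X_power_mult_nth)
  have "(S oo F) $ m = P $ m" if "m \<le> n" for m
  proof -
    have "(S oo F) $ m = (\<Sum>i=0..m. S $ i * (F ^ i $ m))" by (rule fps_compose_nth)
    also have "\<dots> = (\<Sum>i=0..n. S $ i * (F ^ i $ m))"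
      by (rule sum.mono_neutral_left) (use that Fz in auto)
    also have "\<dots> = P $ m" by (simp add: P_def fps_sum_nth)
    finally show ?thesis .
  qed
  hence "((S oo F) * Q) $ n = (P * Q) $ n" by (rule mult_nth_cong)
  also have "\<dots> = (\<Sum>i=0..n. S $ i * (F ^ i * Q) $ n)"
    by (simp add: P_def sum_distrib_right fps_sum_nth mult.assoc)
  also have "\<dots> = (\<Sum>i=0..n. S $ i * (if i = n then 1 else 0))"
  proof (rule sum.cong[OF refl])
    fix i assume i: "i \<in> {0..n}"
    have ri: "r ^ i * inverse r ^ Suc n = inverse r ^ Suc (n - i)"
    proof -
      have "inverse r ^ Suc n = inverse r ^ i * inverse r ^ Suc (n - i)"
        using i by (simp add: power_add[symmetric] Suc_diff_le)
      moreover have "r ^ i * inverse r ^ i = 1"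
        using r0 by (simp add: power_mult_distrib[symmetric] inverse_mult_eq_1')
      ultimately show ?thesis by (metis mult.assoc mult_1)
    qed
    have "(F ^ i * Q) $ n = (r ^ i * Q) $ (n - i)"
      using i by (simp add: Fi mult.assoc fps_X_power_mult_nth)
    also have "\<dots> = (inverse r ^ Suc (n - i) * (r + fps_X * fps_deriv r)) $ (n - i)"
      unfolding Q_def mult.assoc[symmetric] ri ..
    also have "\<dots> = (if i = n then 1 else 0)"
      using lag_aux[OF r0, of "n - i"] i by auto
    finally show "S $ i * (F ^ i * Q) $ n = S $ i * (if i = n then 1 else 0)" by simp
  qed
  also have "\<dots> = S $ n" by (simp add: if_distrib cong: if_cong)
  finally show ?thesis by (simp add: F_def Q_def)
qed

definition rho :: "real fps" where
  "rho = Abs_fps (\<lambda>n. if even n then 1 / real (n + 1) else 0)"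

definition FF :: "real fps" where "FF = fps_X * rho"

lemma rho0: "rho $ 0 = 1" by (simp add: rho_def)
lemma FF0: "FF $ 0 = 0" by (simp add: FF_def)

lemma dFF_nth: "fps_deriv FF $ n = (if even n then 1 else 0)"
proof -
  have "fps_deriv FF $ n = (real n + 1) * rho $ n" by (simp add: FF_def fps_X_mult_nth algebra_simps)
  also have "\<dots> = (if even n then 1 else 0)" by (simp add: rho_def)
  finally show ?thesis .
qed

lemma dFF_eq: "(1 - fps_X ^ 2) * fps_deriv FF = 1"
proof (rule fps_ext)
  fix n
  have "((1 - fps_X ^ 2) * fps_deriv FF) $ n = fps_deriv FF $ n - (fps_X ^ 2 * fps_deriv FF) $ n"
    by (simp add: algebra_simps)
  also have "\<dots> = (1::real fps) $ n"
    unfolding fps_X_power_mult_nth dFF_nth by (cases n; cases "n - 1") auto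
  finally show "((1 - fps_X ^ 2) * fps_deriv FF) $ n = (1::real fps) $ n" .
qed

lemma expFF: "(fps_exp 2 oo FF) * (1 - fps_X) = 1 + fps_X"
proof -
  define Y where "Y = fps_exp 2 oo FF"
  define Z where "Z = Y * (1 - fps_X) - (1 + fps_X)"
  have dY: "fps_deriv Y = 2 * Y * fps_deriv FF"
    unfolding Y_def fps_compose_deriv[OF FF0] fps_exp_deriv
    by (simp add: fps_const_mult_apply_left[symmetric] numeral_fps_const)
  have Y0: "Y $ 0 = 1" by (simp add: Y_def)
  have Z0: "Z $ 0 = 0" by (simp add: Z_def Y0)
  have "(1 + fps_X) * fps_deriv Z = 2 * Y * ((1 - fps_X ^ 2) * fps_deriv FF) - (1 + fps_X) * Y - (1 + fps_X)"
    by (simp add: Z_def dY algebra_simps power2_eq_square)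
  also have "\<dots> = 2 * Y - (1 + fps_X) * Y - (1 + fps_X)" by (simp only: dFF_eq mult_1_right)
  also have "\<dots> = Z" by (simp add: Z_def algebra_simps)
  finally have ZODE: "(1 + fps_X) * fps_deriv Z = Z" .
  have "Z $ n = 0" for n
  proof (induction n)
    case 0 then show ?case by (rule Z0)
  next
    case (Suc n)
    have "((1 + fps_X) * fps_deriv Z) $ n = Z $ n" by (simp add: ZODE)
    hence "fps_deriv Z $ n + (if n = 0 then 0 else fps_deriv Z $ (n - 1)) = Z $ n"
      by (simp add: distrib_right fps_X_mult_nth)
    hence "(real n + 1) * Z $ Suc n = 0" using Suc
      by (cases n) (auto simp: algebra_simps)
    then show ?case by (simp add: add_eq_0_iff_both_eq_0)
  qed
  hence "Z = 0" by (simp add: fps_eq_iff)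
  thus ?thesis by (simp add: Z_def Y_def)
qed

lemma bgf: "bernoulli_gf * (fps_exp 1 - 1) = fps_X"
proof -
  have ne: "fps_exp (1::real) - 1 \<noteq> 0"
    by (metis fps_exp_eq_1_iff one_neq_zero right_minus_eq)
  have sd: "subdegree (fps_exp (1::real) - 1) = 1"
    by (rule subdegreeI) auto
  show ?thesis unfolding bernoulli_gf_def
    by (rule fps_times_divide_eq[OF ne]) (simp only: sd subdegree_fps_X order_refl)
qed

definition CC :: "real fps" where
  "CC = (bernoulli_gf oo (fps_const 2 * fps_X)) + fps_X"

lemma CC_eq: "CC * (fps_exp 2 - 1) = fps_X * (fps_exp 2 + 1)"
proof -
  have c0: "(fps_const (2::real) * fps_X) $ 0 = 0" by simp
  have "(bernoulli_gf oo (fps_const 2 * fps_X)) * (fps_exp 2 - 1)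
      = (bernoulli_gf oo (fps_const 2 * fps_X)) * ((fps_exp 1 - 1) oo (fps_const 2 * fps_X))"
    by (simp add: fps_compose_sub_distrib)
  also have "\<dots> = (bernoulli_gf * (fps_exp 1 - 1)) oo (fps_const 2 * fps_X)"
    by (rule fps_compose_mult_distrib[OF c0, symmetric])
  also have "\<dots> = fps_const 2 * fps_X" by (simp add: bgf)
  finally show ?thesis by (simp add: CC_def algebra_simps numeral_fps_const)
qed

lemma CCF: "CC oo FF = rho"
proof -
  define Y where "Y = fps_exp 2 oo FF"
  have "(CC * (fps_exp 2 - 1)) oo FF = (fps_X * (fps_exp 2 + 1)) oo FF" by (simp add: CC_eq)
  hence e: "(CC oo FF) * (Y - 1) = FF * (Y + 1)"
    by (simp add: fps_compose_mult_distrib[OF FF0] fps_compose_sub_distrib fps_compose_add_distrib FF0 Y_def)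
  have Y1: "Y * (1 - fps_X) = 1 + fps_X" using expFF by (simp add: Y_def)
  have Ym: "(Y - 1) * (1 - fps_X) = fps_const 2 * fps_X"
  proof -
    have "(Y - 1) * (1 - fps_X) = Y * (1 - fps_X) - (1 - fps_X)" by (simp add: left_diff_distrib)
    also have "\<dots> = fps_const 2 * fps_X" unfolding Y1 by (simp add: numeral_fps_const[symmetric])
    finally show ?thesis .
  qed
  have Yp: "(Y + 1) * (1 - fps_X) = fps_const 2"
  proof -
    have "(Y + 1) * (1 - fps_X) = Y * (1 - fps_X) + (1 - fps_X)" by (simp add: distrib_right)
    also have "\<dots> = fps_const 2" unfolding Y1 by (simp add: numeral_fps_const[symmetric])
    finally show ?thesis .
  qed
  have "(CC oo FF) * (fps_const 2 * fps_X) = (CC oo FF) * (Y - 1) * (1 - fps_X)"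
    by (simp only: Ym mult.assoc)
  also have "\<dots> = FF * (Y + 1) * (1 - fps_X)" by (simp add: e)
  also have "\<dots> = rho * (fps_const 2 * fps_X)"
    by (simp only: Yp mult.assoc FF_def) (simp add: algebra_simps)
  finally have "(CC oo FF) * (fps_const 2 * fps_X) = rho * (fps_const 2 * fps_X)" .
  moreover have "fps_const (2::real) * fps_X \<noteq> 0"
  proof
    assume "fps_const (2::real) * fps_X = 0"
    hence "(fps_const (2::real) * fps_X) $ 1 = 0" by simp
    thus False by simp
  qed
  ultimately show ?thesis by simp
qed

definition SS :: "real fps" where "SS = CC - fps_X * fps_deriv CC"

lemma SSF: "(SS oo FF) * fps_deriv FF = rho ^ 2"
proof -
  have ch: "fps_deriv rho = (fps_deriv CC oo FF) * fps_deriv FF"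
    using fps_compose_deriv[OF FF0, of CC] by (simp add: CCF)
  have "(SS oo FF) * fps_deriv FF = rho * fps_deriv FF - FF * ((fps_deriv CC oo FF) * fps_deriv FF)"
    by (simp add: SS_def fps_compose_sub_distrib fps_compose_mult_distrib[OF FF0] FF0 CCF algebra_simps)
  also have "\<dots> = rho ^ 2"
    by (simp only: ch[symmetric]) (simp add: FF_def algebra_simps power2_eq_square)
  finally show ?thesis .
qed

lemma SS_nth: "SS $ n = (1 - real n) * (2 ^ n * bernoulli_gf $ n + (if n = 1 then 1 else 0))"
proof -
  have "(bernoulli_gf oo (fps_const 2 * fps_X)) $ n = 2 ^ n * bernoulli_gf $ n"
    by (simp only: fps_compose_linear) simp
  thus ?thesis by (simp add: SS_def CC_def fps_X_mult_nth algebra_simps)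
qed

lemma part2:
  assumes "g \<ge> 1"
  shows "(inverse rho ^ (2*g - 1)) $ (2*g) = (1 - real (2*g)) * 2 ^ (2*g) * bernoulli_gf $ (2*g)"
proof -
  have r0: "rho $ 0 \<noteq> 0" by (simp add: rho0)
  have dF: "rho + fps_X * fps_deriv rho = fps_deriv FF" by (simp add: FF_def)
  have "(SS oo FF) * (inverse rho ^ Suc (2*g) * fps_deriv FF) = rho ^ 2 * inverse rho ^ Suc (2*g)"
    using SSF by (simp add: algebra_simps)
  also have "\<dots> = inverse rho ^ (2*g - 1)"
  proof -
    have "inverse rho ^ Suc (2*g) = inverse rho ^ 2 * inverse rho ^ (2*g - 1)"
      using assms by (simp add: power_add[symmetric])
    moreover have "rho ^ 2 * inverse rho ^ 2 = 1"
      using r0 by (simp add: power_mult_distrib[symmetric] inverse_mult_eq_1')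
    ultimately show ?thesis by (metis mult.assoc mult_1)
  qed
  finally have "inverse rho ^ (2*g - 1) = (SS oo FF) * (inverse rho ^ Suc (2*g) * (rho + fps_X * fps_deriv rho))"
    by (simp add: dF)
  hence "(inverse rho ^ (2*g - 1)) $ (2*g) = SS $ (2*g)"
    using lagrange[OF r0, of SS "2*g"] by (simp add: FF_def)
  also have "\<dots> = (1 - real (2*g)) * 2 ^ (2*g) * bernoulli_gf $ (2*g)"
    using assms by (simp add: SS_nth)
  finally show ?thesis .
qed


definition supp :: "(nat \<Rightarrow> nat) \<Rightarrow> nat set" where "supp d = {i. d i \<noteq> 0}"

lemma Ninf_finite: "d \<in> Ninf \<Longrightarrow> finite (supp d)" by (simp add: Ninf_def supp_def)

lemma wt_super: assumes "d \<in> Ninf" "finite S" "supp d \<subseteq> S"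
  shows "wt d = (\<Sum>j\<in>S. j * d j)"
  unfolding wt_def by (rule sum.mono_neutral_left) (use assms in \<open>auto simp: supp_def\<close>)

lemma len_super: assumes "d \<in> Ninf" "finite S" "supp d \<subseteq> S"
  shows "len d = (\<Sum>j\<in>S. d j)"
  unfolding len_def by (rule sum.mono_neutral_left) (use assms in \<open>auto simp: supp_def\<close>)

definition TT :: "(nat \<Rightarrow> real) \<Rightarrow> (nat \<Rightarrow> nat) \<Rightarrow> real" where
  "TT a d = (\<Prod>j\<in>{i. d i \<noteq> 0}. a j ^ d j / fact (d j))"

lemma TT_super: assumes "d \<in> Ninf" "finite S" "supp d \<subseteq> S"
  shows "TT a d = (\<Prod>j\<in>S. a j ^ d j / fact (d j))"
  unfolding TT_def by (rule prod.mono_neutral_left) (use assms in \<open>auto simp: supp_def\<close>)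

definition upd :: "(nat \<Rightarrow> nat) \<Rightarrow> nat \<Rightarrow> nat \<Rightarrow> nat" where
  "upd d i = d(i := Suc (d i))"

lemma upd_Ninf: "d \<in> Ninf \<Longrightarrow> i \<ge> 1 \<Longrightarrow> upd d i \<in> Ninf"
proof -
  assume d: "d \<in> Ninf" and i: "i \<ge> 1"
  have "{j. upd d i j \<noteq> 0} \<subseteq> insert i {j. d j \<noteq> 0}" by (auto simp: upd_def)
  moreover have "finite (insert i {j. d j \<noteq> 0})" using d by (simp add: Ninf_def)
  ultimately have "finite {j. upd d i j \<noteq> 0}" by (rule finite_subset)
  moreover have "upd d i 0 = 0" using d i by (simp add: upd_def Ninf_def)
  ultimately show ?thesis by (simp add: Ninf_def)
qed

lemma upd_props:
  assumes d: "d \<in> Ninf" and i: "i \<ge> 1"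
  shows "wt (upd d i) = wt d + i" "len (upd d i) = len d + 1"
        "TT a (upd d i) * real (Suc (d i)) = a i * TT a d"
proof -
  define S where "S = insert i (supp d)"
  have fS: "finite S" using Ninf_finite[OF d] by (simp add: S_def)
  have s1: "supp d \<subseteq> S" by (auto simp: S_def)
  have s2: "supp (upd d i) \<subseteq> S" by (auto simp: S_def supp_def upd_def)
  have u: "upd d i \<in> Ninf" by (rule upd_Ninf[OF d i])
  have iS: "i \<in> S" by (simp add: S_def)
  have agree: "\<And>j. j \<in> S - {i} \<Longrightarrow> upd d i j = d j" by (auto simp: upd_def)
  have e1: "(\<Sum>j\<in>S - {i}. j * upd d i j) = (\<Sum>j\<in>S - {i}. j * d j)"
    by (rule sum.cong) (simp_all add: agree)
  have e2: "(\<Sum>j\<in>S - {i}. upd d i j) = (\<Sum>j\<in>S - {i}. d j)"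
    by (rule sum.cong) (simp_all add: agree)
  show "wt (upd d i) = wt d + i"
    unfolding wt_super[OF u fS s2] wt_super[OF d fS s1] sum.remove[OF fS iS] e1
    by (simp add: upd_def)
  show "len (upd d i) = len d + 1"
    unfolding len_super[OF u fS s2] len_super[OF d fS s1] sum.remove[OF fS iS] e2
    by (simp add: upd_def)
  have e3: "(\<Prod>j\<in>S - {i}. a j ^ upd d i j / fact (upd d i j)) = (\<Prod>j\<in>S - {i}. a j ^ d j / fact (d j))"
    by (rule prod.cong) (simp_all add: agree)
  have p1: "TT a (upd d i) = a i ^ Suc (d i) / fact (Suc (d i)) * (\<Prod>j\<in>S - {i}. a j ^ d j / fact (d j))"
    unfolding TT_super[OF u fS s2] prod.remove[OF fS iS] e3
    by (simp add: upd_def)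
  have p2: "TT a d = a i ^ d i / fact (d i) * (\<Prod>j\<in>S - {i}. a j ^ d j / fact (d j))"
    unfolding TT_super[OF d fS s1] by (rule prod.remove[OF fS iS])
  show "TT a (upd d i) * real (Suc (d i)) = a i * TT a d"
  proof -
    have "a i ^ Suc (d i) / fact (Suc (d i)) * real (Suc (d i)) = a i * (a i ^ d i / fact (d i))"
      by (simp add: fact_Suc field_simps del: of_nat_Suc)
    note q = this
    define P where "P = (\<Prod>j\<in>S - {i}. a j ^ d j / fact (d j))"
    have "TT a (upd d i) * real (Suc (d i)) = (a i ^ Suc (d i) / fact (Suc (d i)) * real (Suc (d i))) * P"
      unfolding p1 P_def by (simp only: ac_simps)
    also have "\<dots> = (a i * (a i ^ d i / fact (d i))) * P" by (simp only: q)
    also have "\<dots> = a i * TT a d" unfolding p2 P_def by (simp only: ac_simps)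
    finally show ?thesis .
  qed
qed

definition W :: "nat \<Rightarrow> (nat \<Rightarrow> nat) set" where "W k = {d \<in> Ninf. wt d = k}"

lemma W_bound:
  assumes "d \<in> W k" "j \<in> supp d"
  shows "1 \<le> j" "j \<le> k" "d j \<le> k" "j * d j \<le> k"
proof -
  have d: "d \<in> Ninf" "wt d = k" using assms by (auto simp: W_def)
  have "j * d j \<le> wt d" unfolding wt_def
    by (rule member_le_sum) (use assms Ninf_finite[OF d(1)] in \<open>auto simp: supp_def\<close>)
  thus jk: "j * d j \<le> k" using d by simp
  show j1: "1 \<le> j" using assms d by (cases j) (auto simp: supp_def Ninf_def)
  have dj: "d j \<ge> 1" using assms by (auto simp: supp_def)
  show "j \<le> k" using jk dj by (metis le_trans mult.right_neutral mult_le_mono2)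
  show "d j \<le> k" using jk j1 by (metis le_trans mult_1 mult_le_mono1)
qed

lemma W_finite: "finite (W k)"
proof -
  have "W k \<subseteq> {f. \<forall>x. (x \<in> {1..k} \<longrightarrow> f x \<in> {0..k}) \<and> (x \<notin> {1..k} \<longrightarrow> f x = 0)}"
  proof (clarify)
    fix d x assume d: "d \<in> W k"
    show "(x \<in> {1..k} \<longrightarrow> d x \<in> {0..k}) \<and> (x \<notin> {1..k} \<longrightarrow> d x = 0)"
    proof (cases "d x = 0")
      case False
      hence "x \<in> supp d" by (simp add: supp_def)
      with W_bound[OF d] show ?thesis by auto
    qed simp
  qed
  thus ?thesis by (rule finite_subset) (rule finite_set_of_finite_funs; simp)
qed

lemma W_sub: "d \<in> W k \<Longrightarrow> supp d \<subseteq> {1..k}"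
  using W_bound(1,2) by auto

lemma W_0: "W 0 = {\<lambda>_. 0}"
proof -
  have "d = (\<lambda>_. 0)" if "d \<in> W 0" for d
  proof
    fix x show "d x = 0" using W_sub[OF that] by (auto simp: supp_def)
  qed
  moreover have "(\<lambda>_. 0::nat) \<in> W 0" by (simp add: W_def Ninf_def wt_def)
  ultimately show ?thesis by blast
qed

lemma W_image:
  assumes i: "1 \<le> i" "i \<le> k"
  shows "(\<lambda>d. upd d i) ` W (k - i) = {d \<in> W k. d i \<noteq> 0}"
proof
  show "(\<lambda>d. upd d i) ` W (k - i) \<subseteq> {d \<in> W k. d i \<noteq> 0}"
    using i upd_props(1) upd_Ninf by (auto simp: W_def upd_def)
next
  show "{d \<in> W k. d i \<noteq> 0} \<subseteq> (\<lambda>d. upd d i) ` W (k - i)"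
  proof (rule subsetI)
    fix d assume "d \<in> {d \<in> W k. d i \<noteq> 0}"
    hence d: "d \<in> W k" "d i \<noteq> 0" by auto
    define d' where "d' = d(i := d i - 1)"
    have du: "upd d' i = d" using d(2) by (auto simp: upd_def d'_def)
    have d'N: "d' \<in> Ninf"
    proof -
      have "{j. d' j \<noteq> 0} \<subseteq> {j. d j \<noteq> 0}" by (auto simp: d'_def)
      moreover have "finite {j. d j \<noteq> 0}" using d by (simp add: W_def Ninf_def)
      ultimately have "finite {j. d' j \<noteq> 0}" by (rule finite_subset)
      moreover have "d' 0 = 0" using d i by (simp add: d'_def W_def Ninf_def)
      ultimately show ?thesis by (simp add: Ninf_def)
    qed
    have "wt d = wt d' + i" using upd_props(1)[OF d'N i(1)] du by simp
    hence "d' \<in> W (k - i)" using d d'N by (auto simp: W_def)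
    thus "d \<in> (\<lambda>d. upd d i) ` W (k - i)" using du by force
  qed
qed

lemma upd_inj: "inj_on (\<lambda>d. upd d i) A"
proof
  fix x y assume "upd x i = upd y i"
  hence "(upd x i)(i := upd x i i - 1) = (upd y i)(i := upd y i i - 1)" by simp
  thus "x = y" by (simp add: upd_def)
qed

definition GG :: "(nat \<Rightarrow> real) \<Rightarrow> nat \<Rightarrow> (nat \<Rightarrow> nat) \<Rightarrow> real" where
  "GG a K d = fact (len d + K) / fact K * (-1) ^ len d * TT a d"

definition hh :: "(nat \<Rightarrow> real) \<Rightarrow> nat \<Rightarrow> nat \<Rightarrow> real" where
  "hh a K k = (\<Sum>d\<in>W k. GG a K d)"

lemma GG_upd:
  assumes "d \<in> Ninf" "1 \<le> i"
  shows "real (Suc (d i)) * GG a K (upd d i) = - real (Suc K) * a i * GG a (Suc K) d"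
proof -
  have l: "len (upd d i) = len d + 1" and t: "TT a (upd d i) * real (Suc (d i)) = a i * TT a d"
    using upd_props[OF assms] by auto
  have f: "fact (len d + 1 + K) / fact K = real (Suc K) * (fact (len d + Suc K) / fact (Suc K) :: real)"
    by (simp add: fact_Suc field_simps del: of_nat_Suc)
  have "real (Suc (d i)) * GG a K (upd d i)
      = fact (len d + 1 + K) / fact K * (-1) ^ (len d + 1) * (TT a (upd d i) * real (Suc (d i)))"
    by (simp add: GG_def l)
  also have "\<dots> = real (Suc K) * (fact (len d + Suc K) / fact (Suc K)) * (-1) ^ (len d + 1) * (a i * TT a d)"
    by (simp only: f t)
  also have "\<dots> = - real (Suc K) * a i * GG a (Suc K) d"
  proof -
    have "(1::real) + real K \<noteq> 0" by linarith
    thus ?thesis by (simp add: GG_def field_simps)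
  qed
  finally show ?thesis .
qed

lemma hh_rec:
  assumes k: "1 \<le> k"
  shows "real k * hh a K k = - real (Suc K) * (\<Sum>i=1..k. real i * a i * hh a (Suc K) (k - i))"
proof -
  have "real k * hh a K k = (\<Sum>d\<in>W k. real (wt d) * GG a K d)"
    by (simp add: hh_def sum_distrib_left W_def)
  also have "\<dots> = (\<Sum>d\<in>W k. \<Sum>i=1..k. real (i * d i) * GG a K d)"
  proof (rule sum.cong[OF refl])
    fix d assume d: "d \<in> W k"
    have "wt d = (\<Sum>j=1..k. j * d j)"
      by (rule wt_super) (use d W_sub[OF d] in \<open>auto simp: W_def\<close>)
    thus "real (wt d) * GG a K d = (\<Sum>i=1..k. real (i * d i) * GG a K d)"
      by (simp add: sum_distrib_right)
  qed
  also have "\<dots> = (\<Sum>i=1..k. \<Sum>d\<in>W k. real (i * d i) * GG a K d)"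
    by (rule sum.swap)
  also have "\<dots> = (\<Sum>i=1..k. - real (Suc K) * (real i * a i * hh a (Suc K) (k - i)))"
  proof (rule sum.cong[OF refl])
    fix i assume i: "i \<in> {1..k}"
    have "(\<Sum>d\<in>W k. real (i * d i) * GG a K d) = (\<Sum>d\<in>{d \<in> W k. d i \<noteq> 0}. real (i * d i) * GG a K d)"
      by (rule sum.mono_neutral_right) (auto simp: W_finite)
    also have "\<dots> = (\<Sum>d\<in>W (k - i). real (i * upd d i i) * GG a K (upd d i))"
    proof -
      have im: "{d \<in> W k. d i \<noteq> 0} = (\<lambda>d. upd d i) ` W (k - i)" using W_image[of i k] i by auto
      show ?thesis unfolding im sum.reindex[OF upd_inj] by (simp add: comp_def)
    qed
    also have "\<dots> = (\<Sum>d\<in>W (k - i). real i * (- real (Suc K) * a i * GG a (Suc K) d))"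
    proof (rule sum.cong[OF refl])
      fix d assume "d \<in> W (k - i)"
      hence dN: "d \<in> Ninf" by (simp add: W_def)
      have "real (i * upd d i i) * GG a K (upd d i) = real i * (real (Suc (d i)) * GG a K (upd d i))"
        by (simp add: upd_def algebra_simps)
      also have "\<dots> = real i * (- real (Suc K) * a i * GG a (Suc K) d)"
        using GG_upd[OF dN, of i] i by simp
      finally show "real (i * upd d i i) * GG a K (upd d i) = real i * (- real (Suc K) * a i * GG a (Suc K) d)" .
    qed
    also have "\<dots> = - real (Suc K) * (real i * a i * hh a (Suc K) (k - i))"
      by (simp add: hh_def sum_distrib_left algebra_simps)
    finally show "(\<Sum>d\<in>W k. real (i * d i) * GG a K d) = - real (Suc K) * (real i * a i * hh a (Suc K) (k - i))" .
  qed
  also have "\<dots> = - real (Suc K) * (\<Sum>i=1..k. real i * a i * hh a (Suc K) (k - i))"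
    by (simp add: sum_distrib_left)
  finally show ?thesis .
qed

definition AA :: "(nat \<Rightarrow> real) \<Rightarrow> real fps" where
  "AA a = Abs_fps (\<lambda>k. if k = 0 then 1 else a k)"

lemma Y_rec:
  assumes k: "1 \<le> k"
  shows "real k * (inverse (AA a) ^ Suc K) $ k
    = - real (Suc K) * (\<Sum>i=1..k. real i * a i * (inverse (AA a) ^ Suc (Suc K)) $ (k - i))"
proof -
  define A where "A = AA a"
  have A0: "A $ 0 \<noteq> 0" by (simp add: A_def AA_def)
  obtain k' where k': "k = Suc k'" using k by (cases k) auto
  have "fps_deriv (inverse A ^ Suc K) = of_nat (Suc K) * fps_deriv (inverse A) * inverse A ^ K"
    using fps_deriv_power'[of "inverse A" "Suc K"] by simp
  also have "\<dots> = - of_nat (Suc K) * (fps_deriv A * inverse A ^ Suc (Suc K))"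
    by (simp add: fps_inverse_deriv[OF A0] power2_eq_square algebra_simps)
  finally have D: "fps_deriv (inverse A ^ Suc K) = - of_nat (Suc K) * (fps_deriv A * inverse A ^ Suc (Suc K))" .
  have "real k * (inverse A ^ Suc K) $ k = fps_deriv (inverse A ^ Suc K) $ k'"
    by (simp add: k' del: power_Suc)
  also have "\<dots> = - real (Suc K) * (fps_deriv A * inverse A ^ Suc (Suc K)) $ k'"
    unfolding D by (simp add: fps_of_nat del: power_Suc of_nat_Suc)
  also have "(fps_deriv A * inverse A ^ Suc (Suc K)) $ k'
      = (\<Sum>j=0..k'. real (Suc j) * a (Suc j) * (inverse A ^ Suc (Suc K)) $ (k' - j))"
    by (simp add: fps_mult_nth A_def AA_def del: power_Suc of_nat_Suc)
  also have "\<dots> = (\<Sum>i=1..k. real i * a i * (inverse A ^ Suc (Suc K)) $ (k - i))"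
  proof -
    have "(\<Sum>i=1..k. real i * a i * (inverse A ^ Suc (Suc K)) $ (k - i))
        = (\<Sum>j=0..k'. real (Suc j) * a (Suc j) * (inverse A ^ Suc (Suc K)) $ (k - Suc j))"
      by (simp only: k' One_nat_def sum.shift_bounds_cl_Suc_ivl)
    thus ?thesis by (simp add: k' del: power_Suc of_nat_Suc)
  qed
  finally show ?thesis by (simp add: A_def)
qed

lemma part1: "hh a K k = (inverse (AA a) ^ Suc K) $ k"
proof (induction k arbitrary: K rule: less_induct)
  case (less k)
  show ?case
  proof (cases "k = 0")
    case True
    have "hh a K 0 = 1"
      by (simp add: hh_def W_0 GG_def len_def TT_def)
    moreover have "(inverse (AA a) ^ Suc K) $ 0 = 1"
      by (simp add: AA_def fps_nth_power_0 del: power_Suc)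
    ultimately show ?thesis using True by simp
  next
    case False
    hence k: "1 \<le> k" by simp
    have "real k * hh a K k = real k * (inverse (AA a) ^ Suc K) $ k"
      unfolding hh_rec[OF k] Y_rec[OF k]
      by (rule arg_cong[where f="\<lambda>x. - real (Suc K) * x"], rule sum.cong[OF refl])
         (use less k in auto)
    thus ?thesis using k by simp
  qed
qed


lemma comp_sq:
  fixes f :: "real fps"
  shows "(f oo (fps_const c * fps_X ^ 2)) $ n = (if even n then c ^ (n div 2) * f $ (n div 2) else 0)"
proof -
  have p: "(fps_const c * fps_X ^ 2) ^ i $ n = (if n = 2 * i then c ^ i else 0)" for i
    by (simp add: power_mult_distrib fps_const_power power_mult[symmetric] fps_X_power_nth)
  have "(f oo (fps_const c * fps_X ^ 2)) $ n = (\<Sum>i=0..n. f $ i * (if n = 2 * i then c ^ i else 0))"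
    by (simp add: fps_compose_nth p)
  also have "\<dots> = (if even n then c ^ (n div 2) * f $ (n div 2) else 0)"
  proof (cases "even n")
    case True
    have "(\<Sum>i=0..n. f $ i * (if n = 2 * i then c ^ i else 0)) = (\<Sum>i\<in>{n div 2}. f $ i * c ^ i)"
      by (rule sum.mono_neutral_cong_right) (use True in auto)
    thus ?thesis using True by simp
  next
    case False
    hence "\<And>i. n \<noteq> 2 * i" by auto
    thus ?thesis using False by simp
  qed
  finally show ?thesis .
qed

definition aw :: "nat \<Rightarrow> real" where "aw i = 1 / real ((2*i+1) * 4^i)"

lemma rho_comp: "rho = AA aw oo (fps_const 4 * fps_X ^ 2)"
proof (rule fps_ext)
  fix n
  show "rho $ n = (AA aw oo (fps_const 4 * fps_X ^ 2)) $ n"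
  proof (cases "even n")
    case True
    then obtain j where j: "n = 2 * j" by blast
    have q: "(4::real) ^ j * aw j = 1 / (1 + 2 * real j)"
    proof -
      have "(4::real) ^ j * aw j = 4 ^ j / (real (2*j+1) * 4 ^ j)" by (simp only: aw_def of_nat_mult of_nat_power of_nat_numeral times_divide_eq_right mult_1_right)
      also have "\<dots> = 1 / real (2*j+1)"
      proof -
        have p: "(4::real) ^ j \<noteq> 0" by simp
        have "(1 * 4 ^ j) / (real (2*j+1) * 4 ^ j) = (1::real) / real (2*j+1)"
          by (rule mult_divide_mult_cancel_right[OF p])
        thus ?thesis by simp
      qed
      finally show ?thesis by simp
    qed
    show ?thesis using q by (simp add: comp_sq rho_def AA_def j)
  next
    case False
    thus ?thesis by (simp add: comp_sq rho_def)
  qed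
qed

lemma coeff_link:
  "(inverse rho ^ N) $ (2*g) = 4 ^ g * (inverse (AA aw) ^ N) $ g"
proof -
  have c0: "(fps_const (4::real) * fps_X ^ 2) $ 0 = 0" by simp
  have a0: "AA aw $ 0 \<noteq> 0" by (simp add: AA_def)
  have "inverse rho ^ N = (inverse (AA aw) ^ N) oo (fps_const 4 * fps_X ^ 2)"
    unfolding rho_comp fps_inverse_compose[OF c0 a0, symmetric] fps_compose_power[OF c0] ..
  thus ?thesis by (simp add: comp_sq)
qed

lemma term_eq:
  assumes d: "d \<in> Ninf" and K: "2 * g = K + 2"
  shows "Gamma (real (len d + 2*g) - 1) * (-1) ^ len d
            / (real (dfact d) * (\<Prod>i\<in>{i. d i \<noteq> 0}. (real ((2*i+1) * 4^i)) ^ d i))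
        = fact K * GG aw K d"
proof -
  have G: "Gamma (real (len d + 2*g) - 1) = fact (len d + K)"
  proof -
    have "real (len d + 2*g) - 1 = 1 + of_nat (len d + K)" using K by simp
    thus ?thesis by (simp only: Gamma_fact)
  qed
  have T: "TT aw d = 1 / (real (dfact d) * (\<Prod>i\<in>{i. d i \<noteq> 0}. (real ((2*i+1) * 4^i)) ^ d i))"
    unfolding TT_def dfact_def aw_def
    by (simp add: prod_dividef prod.distrib power_one_over of_nat_prod)
  show ?thesis unfolding G GG_def T by simp
qed

theorem corollary5p7:
  fixes g :: nat
  assumes "g \<ge> 1"
  shows "(\<Sum>d\<in>{d\<in>Ninf. wt d = g}.
            Gamma (real (len d + 2*g) - 1) * (-1) ^ len d
            / (real (dfact d) * (\<Prod>i\<in>{i. d i \<noteq> 0}. (real ((2*i+1) * 4^i)) ^ d i)))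
         = - bernoulli (2*g) / real (2*g)"
proof -
  define K where "K = 2 * g - 2"
  have K2: "2 * g = K + 2" using assms by (simp add: K_def)
  have SK: "Suc K = 2 * g - 1" using assms by (simp add: K_def)
  have "(\<Sum>d\<in>{d\<in>Ninf. wt d = g}.
            Gamma (real (len d + 2*g) - 1) * (-1) ^ len d
            / (real (dfact d) * (\<Prod>i\<in>{i. d i \<noteq> 0}. (real ((2*i+1) * 4^i)) ^ d i)))
        = (\<Sum>d\<in>W g. fact K * GG aw K d)"
    unfolding W_def by (rule sum.cong[OF refl]) (use term_eq K2 in auto)
  also have "\<dots> = fact K * hh aw K g" by (simp add: hh_def sum_distrib_left)
  also have "hh aw K g = (inverse (AA aw) ^ (2*g - 1)) $ g" by (simp add: part1 SK)
  also have "\<dots> = (1 - real (2*g)) * bernoulli_gf $ (2*g)"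
  proof -
    have "4 ^ g * (inverse (AA aw) ^ (2*g - 1)) $ g = (1 - real (2*g)) * 2 ^ (2*g) * bernoulli_gf $ (2*g)"
      using coeff_link[of "2*g - 1" g] part2[OF assms] by simp
    moreover have "(2::real) ^ (2*g) = 4 ^ g" by (simp add: power_mult)
    ultimately show ?thesis by simp
  qed
  also have "fact K * ((1 - real (2*g)) * bernoulli_gf $ (2*g)) = - bernoulli (2*g) / real (2*g)"
  proof -
    have f: "fact (2*g) = (real K + 2) * (real K + 1) * (fact K :: real)"
      unfolding K2 by (simp add: fact_Suc algebra_simps)
    show ?thesis unfolding bernoulli_def f using K2
      by (simp add: field_simps)
  qed
  finally show ?thesis .
qed



end
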